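(* Let $\mathcal{A}$ be a unital associative algebra over a field $F$ with $\operatorname{char}(F)\neq 2$. Then (a) $\operatorname{GJDer}(\mathcal{A})=\operatorname{QJCent}(\mathcal{A})+\operatorname{QJDer}(\mathcal{A})$, and (b) $\operatorname{JCent}(\mathcal{A})=\operatorname{QJCent}(\mathcal{A})\cap\operatorname{QJDer}(\mathcal{A})$.
   Context: For $x,y\in\mathcal{A}$ let $x\circ y=xy+yx$. All maps below are $F$-linear maps $\mathcal{A}\to\mathcal{A}$. $\operatorname{GJDer}(\mathcal{A})$ (generalized Jordan derivations) is the set of linear $f$ for which there exist linear $g,h$ with $f(x)\circ y+x\circ g(y)=h(x\circ y)$ for all $x,y\in\mathcal{A}$. $\operatorname{QJCent}(\mathcal{A})$ (quasi Jordan centralizers) is the set of linear $f$ with $f(x)\circ y=x\circ f(y)$ for all $x,y$. $\operatorname{QJDer}(\mathcal{A})$ (quasi Jordan derivations) is the set of linear $f$ for which there exists a linear $h$ with $f(x)\circ y+x\circ f(y)=h(x\circ y)$ for all $x,y$. $\operatorname{JCent}(\mathcal{A})$ (Jordan centralizers) is the set of linear $f$ with $f(x\circ y)=f(x)\circ y$ for all $x,y$. The sum of two sets of maps means the set of all pointwise sums. *)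

theory Defs
  imports Main "HOL.Vector_Spaces"
begin

definition assoc_algebra :: "('a::field \<Rightarrow> 'b::ring_1 \<Rightarrow> 'b) \<Rightarrow> bool" where
  "assoc_algebra scale \<longleftrightarrow> Vector_Spaces.vector_space scale \<and>
     (\<forall>c x y. scale c (x * y) = scale c x * y \<and> scale c (x * y) = x * scale c y)"

definition jprod :: "'b::ring \<Rightarrow> 'b \<Rightarrow> 'b" where
  "jprod x y = x * y + y * x"

definition GJDer :: "('a::field \<Rightarrow> 'b::ring_1 \<Rightarrow> 'b) \<Rightarrow> ('b \<Rightarrow> 'b) set" where
  "GJDer scale = {f. Vector_Spaces.linear scale scale f \<and>
     (\<exists>g h. Vector_Spaces.linear scale scale g \<and> Vector_Spaces.linear scale scale h \<and>
        (\<forall>x y. jprod (f x) y + jprod x (g y) = h (jprod x y)))}"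

definition QJCent :: "('a::field \<Rightarrow> 'b::ring_1 \<Rightarrow> 'b) \<Rightarrow> ('b \<Rightarrow> 'b) set" where
  "QJCent scale = {f. Vector_Spaces.linear scale scale f \<and>
     (\<forall>x y. jprod (f x) y = jprod x (f y))}"

definition QJDer :: "('a::field \<Rightarrow> 'b::ring_1 \<Rightarrow> 'b) \<Rightarrow> ('b \<Rightarrow> 'b) set" where
  "QJDer scale = {f. Vector_Spaces.linear scale scale f \<and>
     (\<exists>h. Vector_Spaces.linear scale scale h \<and>
        (\<forall>x y. jprod (f x) y + jprod x (f y) = h (jprod x y)))}"

definition JCent :: "('a::field \<Rightarrow> 'b::ring_1 \<Rightarrow> 'b) \<Rightarrow> ('b \<Rightarrow> 'b) set" where
  "JCent scale = {f. Vector_Spaces.linear scale scale f \<and>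
     (\<forall>x y. f (jprod x y) = jprod (f x) y)}"

definition map_set_sum :: "('b \<Rightarrow> 'b::plus) set \<Rightarrow> ('b \<Rightarrow> 'b) set \<Rightarrow> ('b \<Rightarrow> 'b) set" where
  "map_set_sum S T = {(\<lambda>x. f x + g x) | f g. f \<in> S \<and> g \<in> T}"

end

theory Submission
  imports Defs
begin

lemma jprod_comm: "jprod x y = jprod y x"
  unfolding jprod_def by (simp add: add.commute)

lemma jprod_add1: "jprod (a + b) y = jprod a y + jprod b y"
  unfolding jprod_def by (simp add: algebra_simps)
lemma jprod_add2: "jprod y (a + b) = jprod y a + jprod y b"
  unfolding jprod_def by (simp add: algebra_simps)
lemma jprod_diff1: "jprod (a - b) y = jprod a y - jprod b y"
  unfolding jprod_def by (simp add: algebra_simps)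
lemma jprod_diff2: "jprod y (a - b) = jprod y a - jprod y b"
  unfolding jprod_def by (simp add: algebra_simps)
lemma jprod_one1: "jprod 1 (y::'b::ring_1) = y + y"
  unfolding jprod_def by simp
lemma jprod_one2: "jprod (y::'b::ring_1) 1 = y + y"
  unfolding jprod_def by simp

locale AA =
  fixes scale :: "'a::field \<Rightarrow> 'b::ring_1 \<Rightarrow> 'b"
  assumes A: "assoc_algebra scale" and two: "(2::'a) \<noteq> 0"
begin

lemma VS: "vector_space scale"
  using A unfolding assoc_algebra_def by blast

lemma MOD: "module scale"
  using VS by (simp add: module_iff_vector_space)

lemma sc1: "scale c (x * y) = scale c x * y"
  using A unfolding assoc_algebra_def by blast
lemma sc2: "scale c (x * y) = x * scale c y"
  using A unfolding assoc_algebra_def by blast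

lemma jsc1: "jprod (scale c a) b = scale c (jprod a b)"
  unfolding jprod_def by (simp add: sc1[symmetric] sc2[symmetric] module.scale_right_distrib[OF MOD])
lemma jsc2: "jprod a (scale c b) = scale c (jprod a b)"
  unfolding jprod_def by (simp add: sc1[symmetric] sc2[symmetric] module.scale_right_distrib[OF MOD])

lemma half: "scale (1/2) (x + x) = x"
proof -
  have "scale (1/2) (x+x) = scale (1/2) (scale 1 x + scale 1 x)"
    by (simp only: module.scale_one[OF MOD])
  also have "\<dots> = scale (1/2) (scale (1+1) x)"
    by (simp only: module.scale_left_distrib[OF MOD])
  also have "\<dots> = scale ((1/2)*(1+1)) x"
    by (simp only: module.scale_scale[OF MOD])
  also have "(1/2)*(1+1) = (1::'a)" using two by simp
  finally show ?thesis by (simp only: module.scale_one[OF MOD])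
qed

lemma cancel2: "(x::'b) + x = y + y \<Longrightarrow> x = y"
proof -
  assume "x + x = y + y"
  then have "scale (1/2) (x + x) = scale (1/2) (y + y)" by simp
  then show "x = y" by (simp only: half)
qed

lemma lin_add: "Vector_Spaces.linear scale scale f \<Longrightarrow> Vector_Spaces.linear scale scale g \<Longrightarrow> Vector_Spaces.linear scale scale (\<lambda>x. f x + g x)"
  unfolding Vector_Spaces.linear_iff by (simp add: module.scale_right_distrib[OF MOD] algebra_simps)
lemma lin_diff: "Vector_Spaces.linear scale scale f \<Longrightarrow> Vector_Spaces.linear scale scale g \<Longrightarrow> Vector_Spaces.linear scale scale (\<lambda>x. f x - g x)"
  unfolding Vector_Spaces.linear_iff by (simp add: module.scale_right_diff_distrib[OF MOD] algebra_simps)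
lemma lin_sc: "Vector_Spaces.linear scale scale f \<Longrightarrow> Vector_Spaces.linear scale scale (\<lambda>x. scale c (f x))"
  unfolding Vector_Spaces.linear_iff by (simp add: module.scale_right_distrib[OF MOD] module.scale_scale[OF MOD] mult.commute)

lemma partA1: "GJDer scale \<subseteq> map_set_sum (QJCent scale) (QJDer scale)"
proof
  fix f assume "f \<in> GJDer scale"
  then obtain g h where lf: "Vector_Spaces.linear scale scale f" and lg: "Vector_Spaces.linear scale scale g"
    and lh: "Vector_Spaces.linear scale scale h" and E: "\<And>x y. jprod (f x) y + jprod x (g y) = h (jprod x y)"
    unfolding GJDer_def by blast
  define f1 where "f1 = (\<lambda>x. scale (1/2) (f x - g x))"
  define f2 where "f2 = (\<lambda>x. scale (1/2) (f x + g x))"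
  have sw: "jprod (f x) y + jprod x (g y) = jprod (g x) y + jprod x (f y)" for x y
  proof -
    have e2: "jprod (g x) y + jprod x (f y) = h (jprod x y)"
      using E[of y x] unfolding jprod_def by (simp add: ac_simps)
    show ?thesis using E[of x y] e2 by simp
  qed
  have "f1 \<in> QJCent scale"
    unfolding QJCent_def f1_def
  proof (intro CollectI conjI allI)
    show "Vector_Spaces.linear scale scale (\<lambda>x. scale (1 / 2) (f x - g x))"
      by (intro lin_sc lin_diff lf lg)
    fix x y
    have "jprod (f x - g x) y = jprod x (f y - g y)"
      using sw[of x y] by (simp add: jprod_diff1 jprod_diff2 algebra_simps)
    then show "jprod (scale (1 / 2) (f x - g x)) y = jprod x (scale (1 / 2) (f y - g y))"
      by (simp add: jsc1 jsc2)
  qed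
  moreover have "f2 \<in> QJDer scale"
    unfolding QJDer_def f2_def
  proof (intro CollectI conjI exI allI)
    show "Vector_Spaces.linear scale scale (\<lambda>x. scale (1 / 2) (f x + g x))"
      by (intro lin_sc lin_add lf lg)
    show "Vector_Spaces.linear scale scale h" by fact
    fix x y
    have "jprod (f x + g x) y + jprod x (f y + g y) = (jprod (f x) y + jprod x (g y)) + (jprod (g x) y + jprod x (f y))"
      by (simp add: jprod_add1 jprod_add2 algebra_simps)
    also have "\<dots> = h (jprod x y) + h (jprod x y)"
      using sw[of x y] E[of x y] by simp
    finally have "jprod (f x + g x) y + jprod x (f y + g y) = h (jprod x y) + h (jprod x y)" .
    then show "jprod (scale (1 / 2) (f x + g x)) y + jprod x (scale (1 / 2) (f y + g y)) = h (jprod x y)"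
      by (simp add: jsc1 jsc2 half flip: module.scale_right_distrib[OF MOD])
  qed
  moreover have "f = (\<lambda>x. f1 x + f2 x)"
  proof
    fix x
    have "f1 x + f2 x = scale (1/2) (f x + f x)"
      unfolding f1_def f2_def by (simp flip: module.scale_right_distrib[OF MOD])
    then show "f x = f1 x + f2 x" by (simp add: half)
  qed
  ultimately show "f \<in> map_set_sum (QJCent scale) (QJDer scale)"
    unfolding map_set_sum_def by blast
qed

lemma partA2: "map_set_sum (QJCent scale) (QJDer scale) \<subseteq> GJDer scale"
proof
  fix f assume "f \<in> map_set_sum (QJCent scale) (QJDer scale)"
  then obtain c d h where f: "f = (\<lambda>x. c x + d x)" and lc: "Vector_Spaces.linear scale scale c"
    and C: "\<And>x y. jprod (c x) y = jprod x (c y)"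
    and ld: "Vector_Spaces.linear scale scale d" and lh: "Vector_Spaces.linear scale scale h"
    and D: "\<And>x y. jprod (d x) y + jprod x (d y) = h (jprod x y)"
    unfolding map_set_sum_def QJCent_def QJDer_def by blast
  show "f \<in> GJDer scale"
    unfolding GJDer_def f
  proof (intro CollectI conjI exI allI)
    show "Vector_Spaces.linear scale scale (\<lambda>x. c x + d x)" by (intro lin_add lc ld)
    show "Vector_Spaces.linear scale scale (\<lambda>x. d x - c x)" by (intro lin_diff lc ld)
    show "Vector_Spaces.linear scale scale h" by fact
    fix x y
    show "jprod (c x + d x) y + jprod x (d y - c y) = h (jprod x y)"
      using C[of x y] D[of x y] by (simp add: jprod_add1 jprod_diff2 algebra_simps)
  qed
qed

lemma partB: "JCent scale = QJCent scale \<inter> QJDer scale"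
proof (intro equalityI subsetI)
  fix f assume "f \<in> JCent scale"
  then have lf: "Vector_Spaces.linear scale scale f" and J: "\<And>x y. f (jprod x y) = jprod (f x) y"
    unfolding JCent_def by auto
  have C: "jprod (f x) y = jprod x (f y)" for x y
  proof -
    have "jprod (f x) y = f (jprod x y)" by (rule J[symmetric])
    also have "\<dots> = f (jprod y x)" by (rule arg_cong[where f=f], rule jprod_comm)
    also have "\<dots> = jprod (f y) x" by (rule J)
    also have "\<dots> = jprod x (f y)" by (rule jprod_comm)
    finally show ?thesis .
  qed
  have "f \<in> QJCent scale" unfolding QJCent_def using lf C by blast
  moreover have "f \<in> QJDer scale" unfolding QJDer_def
  proof (intro CollectI conjI exI allI)
    show "Vector_Spaces.linear scale scale f" by fact
    show "Vector_Spaces.linear scale scale (\<lambda>x. f x + f x)" by (intro lin_add lf)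
    fix x y show "jprod (f x) y + jprod x (f y) = f (jprod x y) + f (jprod x y)"
      using C J by simp
  qed
  ultimately show "f \<in> QJCent scale \<inter> QJDer scale" by blast
next
  fix f assume "f \<in> QJCent scale \<inter> QJDer scale"
  then obtain h where lf: "Vector_Spaces.linear scale scale f" and C: "\<And>x y. jprod (f x) y = jprod x (f y)"
    and lh: "Vector_Spaces.linear scale scale h" and D: "\<And>x y. jprod (f x) y + jprod x (f y) = h (jprod x y)"
    unfolding QJCent_def QJDer_def by blast
  have fadd: "f (x + y) = f x + f y" for x y using lf unfolding Vector_Spaces.linear_iff by blast
  have hadd: "h (x + y) = h x + h y" for x y using lh unfolding Vector_Spaces.linear_iff by blast
  have H: "h x = f x + f x" for x
  proof -
    have "(f x + f x) + (f x + f x) = h (x + x)"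
      using D[of x 1] C[of x 1] by (simp add: jprod_one2 jprod_one1)
    then have "h x + h x = (f x + f x) + (f x + f x)" by (simp only: hadd)
    then show ?thesis by (rule cancel2)
  qed
  have J2: "f (jprod x y) = jprod (f x) y" for x y
  proof -
    have "f (jprod x y) + f (jprod x y) = jprod (f x) y + jprod (f x) y"
      using D[of x y] C[of x y] H[of "jprod x y"] by simp
    then show ?thesis by (rule cancel2)
  qed
  show "f \<in> JCent scale" unfolding JCent_def using lf J2 by simp
qed

end

theorem theorem2p1:
  fixes scale :: "'a::field \<Rightarrow> 'b::ring_1 \<Rightarrow> 'b"
  assumes "assoc_algebra scale"
    and "(2::'a) \<noteq> 0"
  shows "GJDer scale = map_set_sum (QJCent scale) (QJDer scale) \<and>
         JCent scale = QJCent scale \<inter> QJDer scale"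
proof -
  interpret AA scale using assms by unfold_locales
  show ?thesis by (rule conjI[OF equalityI[OF partA1 partA2] partB])
qed

end
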